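(* Let $n\ge1$, let $p$ be a prime and let $\ell(\mathbf{z})\in\mathbb{F}_p[\mathbf{z}]$ be a nonvanishing linear form in $n$ variables $\mathbf{z}=(z_1,\dots,z_n)$. For an $n\times n$ matrix of variables $\mathbf{X}=(\mathbf{z}\mid\mathbf{Z})$ (first column $\mathbf{z}$, remaining columns $\mathbf{Z}$) put $L(\mathbf{X})=\ell(\mathbf{z})$. Then \[ S_p(L)=\sum_{\substack{\mathbf{X}\in\mathbb{F}_p^{n\times n}\\ \det\mathbf{X}=0}}\exp\left(2\pi i\,L(\mathbf{X})/p\right)\ll p^{n^2-n}, \] where the implied constant depends only on $n$.
   Context: Here $L(\mathbf{X})\in\mathbb{F}_p$ is identified with an integer in $\{0,\dots,p-1\}$ in the exponential. *)

theory Defs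
  imports Complex_Main "Jordan_Normal_Form.Determinant"
begin

text \<open>Elements of F_p are represented by integers in {0..<p}; an n x n matrix over F_p
  is an integer n x n matrix with all entries in {0..<p}.\<close>
definition Fp_mats :: "nat \<Rightarrow> nat \<Rightarrow> int mat set" where
  "Fp_mats p n = {A \<in> carrier_mat n n. \<forall>i<n. \<forall>j<n. A $$ (i, j) \<in> {0..<int p}}"

definition singular_mod :: "nat \<Rightarrow> int mat \<Rightarrow> bool" where
  "singular_mod p A \<longleftrightarrow> det A mod int p = 0"

definition lin_L :: "nat \<Rightarrow> nat \<Rightarrow> (nat \<Rightarrow> int) \<Rightarrow> int mat \<Rightarrow> int" where
  "lin_L p n a A = (\<Sum>i<n. a i * A $$ (i, 0)) mod int p"

definition S_p :: "nat \<Rightarrow> nat \<Rightarrow> (nat \<Rightarrow> int) \<Rightarrow> complex" where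
  "S_p p n a = (\<Sum>A\<in>{A \<in> Fp_mats p n. singular_mod p A}.
      exp (2 * of_real pi * \<i> * of_int (lin_L p n a A) / of_nat p))"

end

theory Submission
  imports Defs
begin

definition ee :: "nat \<Rightarrow> int \<Rightarrow> complex" where
  "ee p m = exp (2 * of_real pi * \<i> * of_int m / of_nat p)"

lemma ee_add: "ee p (x + y) = ee p x * ee p y"
  unfolding ee_def by (simp add: exp_add[symmetric] add_divide_distrib distrib_left)

lemma ee_mult: "p > 0 \<Longrightarrow> ee p (int p * k) = 1"
proof -
  assume p: "p > 0"
  have "2 * of_real pi * \<i> * of_int (int p * k) / of_nat p = \<i> * complex_of_real (2 * pi * real_of_int k)"
    using p by (simp add: field_simps)
  moreover have "cis (2 * pi * real_of_int k) = 1" by simp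
  ultimately show ?thesis unfolding ee_def by (simp add: cis_conv_exp)
qed

lemma ee_cong: "p > 0 \<Longrightarrow> x mod int p = y mod int p \<Longrightarrow> ee p x = ee p y"
proof -
  assume p: "p > 0" and h: "x mod int p = y mod int p"
  have x: "x = x mod int p + int p * (x div int p)" by simp
  have y: "y = y mod int p + int p * (y div int p)" by simp
  have "ee p x = ee p (x mod int p)" by (subst x, simp only: ee_add ee_mult[OF p]) simp
  moreover have "ee p y = ee p (y mod int p)" by (subst y, simp only: ee_add ee_mult[OF p]) simp
  ultimately show ?thesis using h by simp
qed

lemma ee_norm: "cmod (ee p m) = 1"
  unfolding ee_def by (simp add: norm_exp)

lemma ee_one: "p > 0 \<Longrightarrow> ee p m = 1 \<Longrightarrow> int p dvd m"
proof -
  assume p: "p > 0" and h: "ee p m = 1"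
  have "2 * of_real pi * \<i> * of_int m / of_nat p = \<i> * complex_of_real (2 * pi * m / p)"
    by simp
  then have "cis (2 * pi * m / p) = 1" using h unfolding ee_def by (simp only: cis_conv_exp)
  then have "cos (2 * pi * m / p) = 1" by (metis cis.sel(1) one_complex.sel(1))
  then obtain x :: int where "2 * pi * m / p = real_of_int x * 2 * pi" using cos_one_2pi_int by meson
  then have "real_of_int m = real_of_int x * real p" using p pi_gt_zero
    by (simp add: field_simps)
  then have "m = x * int p" by (metis of_int_eq_iff of_int_mult of_int_of_nat_eq)
  then show ?thesis by simp
qed

definition keym :: "nat \<Rightarrow> int mat \<Rightarrow> int mat" where
  "keym n A = mat n n (\<lambda>(i,j). if j = 0 then 0 else A $$ (i,j))"

lemma det_lin:
  assumes A: "A \<in> carrier_mat n n" and n: "n > 0"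
  shows "det A = (\<Sum>i<n. A $$ (i,0) * cofactor (keym n A) i 0)"
proof -
  have "cofactor A i 0 = cofactor (keym n A) i 0" if i: "i < n" for i
  proof -
    have "mat_delete A i 0 = mat_delete (keym n A) i 0"
      unfolding mat_delete_def keym_def using A by (intro eq_matI) auto
    then show ?thesis unfolding cofactor_def by simp
  qed
  then show ?thesis using laplace_expansion_column[OF A n] by simp
qed


lemma range_dvd_eq:
  fixes x y :: int
  assumes "0 \<le> x" "x < q" "0 \<le> y" "y < q" "q dvd x - y"
  shows "x = y"
proof -
  have "x mod q = y mod q" using assms(5) by (simp add: mod_eq_dvd_iff)
  then show ?thesis using assms by simp
qed

definition ellc :: "nat \<Rightarrow> (nat \<Rightarrow> int) \<Rightarrow> int mat \<Rightarrow> nat \<Rightarrow> int" where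
  "ellc n a A j = (\<Sum>i<n. a i * A $$ (i,j))"

definition Gset :: "nat \<Rightarrow> nat \<Rightarrow> (nat \<Rightarrow> int) \<Rightarrow> int mat set" where
  "Gset p n a = {A \<in> Fp_mats p n. \<forall>j<n. ellc n a A j mod int p = 0}"

lemma fin_Fp: "finite (Fp_mats p n)"
proof (rule inj_on_finite[where f = "\<lambda>A. restrict (\<lambda>ij. A $$ ij) ({..<n}\<times>{..<n})"])
  show "inj_on (\<lambda>A. restrict (\<lambda>ij. A $$ ij) ({..<n}\<times>{..<n})) (Fp_mats p n)"
  proof (rule inj_onI)
    fix A B assume A: "A \<in> Fp_mats p n" and B: "B \<in> Fp_mats p n"
      and e: "restrict (\<lambda>ij. A $$ ij) ({..<n}\<times>{..<n}) = restrict (\<lambda>ij. B $$ ij) ({..<n}\<times>{..<n})"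
    show "A = B"
    proof (rule eq_matI)
      fix i j assume "i < dim_row B" "j < dim_col B"
      then show "A $$ (i,j) = B $$ (i,j)" using B fun_cong[OF e, of "(i,j)"]
        unfolding Fp_mats_def by auto
    qed (use A B in \<open>auto simp: Fp_mats_def\<close>)
  qed
  show "(\<lambda>A. restrict (\<lambda>ij. A $$ ij) ({..<n}\<times>{..<n})) ` Fp_mats p n \<subseteq> PiE ({..<n}\<times>{..<n}) (\<lambda>_. {0..<int p})"
    unfolding Fp_mats_def by (auto simp: image_subset_iff restrict_PiE_iff)
  show "finite (PiE ({..<n}\<times>{..<n}) (\<lambda>_. {0..<int p}))" by (intro finite_PiE) auto
qed

lemma card_G:
  assumes p: "prime p" and k: "k < n" and ak: "a k \<in> {1..<int p}"
  shows "card (Gset p n a) \<le> p ^ (n * (n - 1))"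
proof -
  define D where "D = ({..<n}-{k}) \<times> {..<n}"
  define f where "f = (\<lambda>A::int mat. restrict (\<lambda>ij. A $$ ij) D)"
  have pp: "prime (int p)" using p by simp
  have nd: "\<not> int p dvd a k" using ak zdvd_imp_le[of "int p" "a k"] by auto
  have inj: "inj_on f (Gset p n a)"
  proof (rule inj_onI)
    fix A B assume A: "A \<in> Gset p n a" and B: "B \<in> Gset p n a" and e: "f A = f B"
    have Ac: "A \<in> carrier_mat n n" and Bc: "B \<in> carrier_mat n n" using A B
      unfolding Gset_def Fp_mats_def by auto
    show "A = B"
    proof (rule eq_matI)
      fix i j assume "i < dim_row B" "j < dim_col B"
      then have i: "i < n" and j: "j < n" using Bc by auto
      have other: "A $$ (i',j) = B $$ (i',j)" if "i' < n" "i' \<noteq> k" for i'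
        using fun_cong[OF e, of "(i',j)"] that j unfolding f_def D_def by auto
      show "A $$ (i,j) = B $$ (i,j)"
      proof (cases "i = k")
        case False then show ?thesis using other i by auto
      next
        case True
        have fin: "finite {..<n}" by simp
        have kk: "k \<in> {..<n}" using k by simp
        have sA: "ellc n a A j = a k * A $$ (k,j) + (\<Sum>i\<in>{..<n}-{k}. a i * A $$ (i,j))"
          unfolding ellc_def using sum.remove[OF fin kk] by simp
        have sB: "ellc n a B j = a k * B $$ (k,j) + (\<Sum>i\<in>{..<n}-{k}. a i * B $$ (i,j))"
          unfolding ellc_def using sum.remove[OF fin kk] by simp
        have "(\<Sum>i\<in>{..<n}-{k}. a i * A $$ (i,j)) = (\<Sum>i\<in>{..<n}-{k}. a i * B $$ (i,j))"
          using other by (intro sum.cong) auto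
        then have "ellc n a A j - ellc n a B j = a k * (A $$ (k,j) - B $$ (k,j))"
          using sA sB by (simp add: algebra_simps)
        moreover have "int p dvd ellc n a A j" "int p dvd ellc n a B j"
          using A B j unfolding Gset_def by auto
        ultimately have "int p dvd a k * (A $$ (k,j) - B $$ (k,j))"
          by (metis dvd_diff)
        then have "int p dvd A $$ (k,j) - B $$ (k,j)" using pp nd prime_dvd_mult_iff by blast
        moreover have "A $$ (k,j) \<in> {0..<int p}" "B $$ (k,j) \<in> {0..<int p}"
          using A B k j unfolding Gset_def Fp_mats_def by auto
        ultimately show ?thesis using True range_dvd_eq[of "A $$ (k,j)" "int p" "B $$ (k,j)"] by auto
      qed
    qed (use Ac Bc in auto)
  qed
  have sub: "f ` Gset p n a \<subseteq> PiE D (\<lambda>_. {0..<int p})"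
    unfolding f_def D_def Gset_def Fp_mats_def by (auto simp: image_subset_iff restrict_PiE_iff)
  have finD: "finite D" unfolding D_def by auto
  have "card (Gset p n a) \<le> card (PiE D (\<lambda>_. {0..<int p}))"
    using card_inj_on_le[OF inj sub] finD by (simp add: finite_PiE)
  also have "\<dots> = p ^ card D" by (simp add: card_PiE finD)
  also have "card D = (n - 1) * n" unfolding D_def using k by (simp add: card_cartesian_product)
  finally show ?thesis by (simp add: mult.commute)
qed


lemma modsum_l: "(\<Sum>i\<in>I. (f i mod (q::int)) * c i) mod q = (\<Sum>i\<in>I. f i * c i) mod q"
proof -
  have "(\<Sum>i\<in>I. (f i mod q) * c i) mod q = (\<Sum>i\<in>I. ((f i mod q) * c i) mod q) mod q"
    by (simp add: mod_sum_eq)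
  also have "\<dots> = (\<Sum>i\<in>I. (f i * c i) mod q) mod q" by (simp add: mod_mult_left_eq)
  also have "\<dots> = (\<Sum>i\<in>I. f i * c i) mod q" by (simp add: mod_sum_eq)
  finally show ?thesis .
qed

lemma modsum_r: "(\<Sum>i\<in>I. c i * (f i mod (q::int))) mod q = (\<Sum>i\<in>I. c i * f i) mod q"
  using modsum_l[of f q c I] by (simp add: mult.commute)

lemma sum_ind: "finite M \<Longrightarrow> (\<Sum>A\<in>M. (if A \<in> G then 1 else 0::real)) = real (card (M \<inter> G))"
  by (simp add: sum.If_cases)


lemma fiber_bound:
  fixes K0 :: "int mat" and a :: "nat \<Rightarrow> int"
  assumes p: "prime p" and n: "n > 0"
  defines "F \<equiv> {A \<in> {A \<in> Fp_mats p n. singular_mod p A}. keym n A = K0}"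
  shows "cmod (\<Sum>A\<in>F. ee p (lin_L p n a A)) \<le> (\<Sum>A\<in>F. (if A \<in> Gset p n a then 1 else 0::real))"
proof -
  have p0: "p > 0" using p prime_gt_0_nat by blast
  have finF: "finite F" unfolding F_def using fin_Fp[of p n] by (auto intro: finite_subset)
  have Fprop: "A \<in> carrier_mat n n \<and> (\<forall>i<n. \<forall>j<n. A $$ (i,j) \<in> {0..<int p}) \<and> det A mod int p = 0
      \<and> keym n A = K0" if "A \<in> F" for A
    using that unfolding F_def Fp_mats_def singular_mod_def by auto
  have Fintro: "A \<in> F" if "A \<in> carrier_mat n n" "\<forall>i<n. \<forall>j<n. A $$ (i,j) \<in> {0..<int p}"
      "det A mod int p = 0" "keym n A = K0" for A
    using that unfolding F_def Fp_mats_def singular_mod_def by auto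
  have linL: "lin_L p n a A = ellc n a A 0 mod int p" for A
    unfolding lin_L_def ellc_def by simp
  show ?thesis
  proof (cases "\<exists>A0\<in>F. lin_L p n a A0 \<noteq> 0")
    case True
    then obtain A0 where A0: "A0 \<in> F" and l0: "lin_L p n a A0 \<noteq> 0" by blast
    define \<tau> where "\<tau> = (\<lambda>A::int mat. mat n n (\<lambda>(i,j). if j = 0 then (A $$ (i,0) + A0 $$ (i,0)) mod int p
        else A $$ (i,j)))"
    have \<tau>c: "\<tau> A \<in> carrier_mat n n" for A unfolding \<tau>_def by simp
    have \<tau>idx: "\<tau> A $$ (i,j) = (if j = 0 then (A $$ (i,0) + A0 $$ (i,0)) mod int p else A $$ (i,j))"
      if "i < n" "j < n" for A i j unfolding \<tau>_def using that by simp
    have key\<tau>: "keym n (\<tau> A) = keym n A" for A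
      unfolding keym_def by (rule eq_matI) (auto simp: \<tau>idx)
    have cof: "cofactor (keym n B) i 0 = cofactor K0 i 0" if "B \<in> F" for B i
      using Fprop[OF that] by simp
    have \<tau>F: "\<tau> A \<in> F" if A: "A \<in> F" for A
    proof (rule Fintro)
      show "\<tau> A \<in> carrier_mat n n" by (rule \<tau>c)
      show "\<forall>i<n. \<forall>j<n. \<tau> A $$ (i, j) \<in> {0..<int p}"
        using Fprop[OF A] p0 by (auto simp: \<tau>idx)
      show kk: "keym n (\<tau> A) = K0" using Fprop[OF A] key\<tau> by simp
      have "det (\<tau> A) = (\<Sum>i<n. \<tau> A $$ (i,0) * cofactor K0 i 0)"
        using det_lin[OF \<tau>c n, of A] kk by simp
      also have "\<dots> = (\<Sum>i<n. ((A $$ (i,0) + A0 $$ (i,0)) mod int p) * cofactor K0 i 0)"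
        using n by (intro sum.cong) (auto simp: \<tau>idx)
      finally have "det (\<tau> A) mod int p = (\<Sum>i<n. (A $$ (i,0) + A0 $$ (i,0)) * cofactor K0 i 0) mod int p"
        by (simp add: modsum_l)
      also have "\<dots> = (det A + det A0) mod int p"
        using det_lin[of A n] det_lin[of A0 n] Fprop[OF A] Fprop[OF A0] n
        by (simp add: distrib_right sum.distrib)
      also have "\<dots> = 0" using Fprop[OF A] Fprop[OF A0] by (metis add.right_neutral mod_add_eq mod_0)
      finally show "det (\<tau> A) mod int p = 0" .
    qed
    have inj: "inj_on \<tau> F"
    proof (rule inj_onI)
      fix A B assume A: "A \<in> F" and B: "B \<in> F" and e: "\<tau> A = \<tau> B"
      show "A = B"
      proof (rule eq_matI)
        fix i j assume "i < dim_row B" "j < dim_col B"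
        then have i: "i < n" and j: "j < n" using Fprop[OF B] by auto
        have e': "\<tau> A $$ (i,j) = \<tau> B $$ (i,j)" using e by simp
        show "A $$ (i,j) = B $$ (i,j)"
        proof (cases "j = 0")
          case False then show ?thesis using e' i j by (simp add: \<tau>idx)
        next
          case True
          then have "(A $$ (i,0) + A0 $$ (i,0)) mod int p = (B $$ (i,0) + A0 $$ (i,0)) mod int p"
            using e' i j by (simp add: \<tau>idx)
          then have "int p dvd A $$ (i,0) - B $$ (i,0)"
            by (metis (no_types, lifting) mod_eq_dvd_iff add_diff_cancel_right)
          then show ?thesis using True Fprop[OF A] Fprop[OF B] i j
              range_dvd_eq[of "A $$ (i,0)" "int p" "B $$ (i,0)"] by auto
        qed
      qed (use Fprop[OF A] Fprop[OF B] in auto)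
    qed
    have img: "\<tau> ` F = F"
      using inj \<tau>F finF by (metis card_image card_subset_eq image_subsetI)
    have g\<tau>: "ee p (lin_L p n a (\<tau> A)) = ee p (lin_L p n a A) * ee p (lin_L p n a A0)" if A: "A \<in> F" for A
    proof -
      have "ellc n a (\<tau> A) 0 = (\<Sum>i<n. a i * ((A $$ (i,0) + A0 $$ (i,0)) mod int p))"
        unfolding ellc_def using n by (intro sum.cong) (auto simp: \<tau>idx)
      then have "ellc n a (\<tau> A) 0 mod int p = (ellc n a A 0 + ellc n a A0 0) mod int p"
        by (simp add: modsum_r ellc_def distrib_left sum.distrib)
      then have "ee p (lin_L p n a (\<tau> A)) = ee p (ellc n a A 0 + ellc n a A0 0)"
        using p0 by (intro ee_cong) (simp_all add: linL)
      also have "\<dots> = ee p (lin_L p n a A) * ee p (lin_L p n a A0)"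
      proof -
        have "ee p (ellc n a A 0) = ee p (lin_L p n a A)" by (rule ee_cong[OF p0]) (simp add: linL)
        moreover have "ee p (ellc n a A0 0) = ee p (lin_L p n a A0)" by (rule ee_cong[OF p0]) (simp add: linL)
        ultimately show ?thesis by (simp only: ee_add)
      qed
      finally show ?thesis .
    qed
    have "(\<Sum>A\<in>F. ee p (lin_L p n a A)) = (\<Sum>A\<in>\<tau> ` F. ee p (lin_L p n a A))" using img by simp
    also have "\<dots> = (\<Sum>A\<in>F. ee p (lin_L p n a (\<tau> A)))" by (simp add: sum.reindex[OF inj])
    also have "\<dots> = ee p (lin_L p n a A0) * (\<Sum>A\<in>F. ee p (lin_L p n a A))"
      by (simp add: g\<tau> sum_distrib_left mult.commute)
    finally have eq: "(\<Sum>A\<in>F. ee p (lin_L p n a A)) = ee p (lin_L p n a A0) * (\<Sum>A\<in>F. ee p (lin_L p n a A))" .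
    have ne: "ee p (lin_L p n a A0) \<noteq> 1"
    proof
      assume "ee p (lin_L p n a A0) = 1"
      then have "int p dvd lin_L p n a A0" using ee_one p0 by blast
      moreover have "0 \<le> lin_L p n a A0" "lin_L p n a A0 < int p" unfolding lin_L_def using p0 by auto
      ultimately show False using l0 zdvd_imp_le[of "int p" "lin_L p n a A0"] by fastforce
    qed
    have "(\<Sum>A\<in>F. ee p (lin_L p n a A)) = 0"
    proof (rule ccontr)
      assume "(\<Sum>A\<in>F. ee p (lin_L p n a A)) \<noteq> 0"
      then have "ee p (lin_L p n a A0) = 1" using eq by (metis mult_cancel_right1)
      then show False using ne by simp
    qed
    moreover have "0 \<le> (\<Sum>A\<in>F. (if A \<in> Gset p n a then 1 else 0::real))" by (intro sum_nonneg) auto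
    ultimately show ?thesis by simp
  next
    case False
    then have z: "lin_L p n a A = 0" if "A \<in> F" for A using that by blast
    have FG: "A \<in> Gset p n a" if A: "A \<in> F" for A
    proof -
      have "ellc n a A j mod int p = 0" if j: "j < n" for j
      proof (cases "j = 0")
        case True then show ?thesis using z[OF A] by (simp add: linL)
      next
        case False
        define A' where "A' = mat n n (\<lambda>(i,j'). if j' = 0 then A $$ (i,j) else A $$ (i,j'))"
        have A'c: "A' \<in> carrier_mat n n" unfolding A'_def by simp
        have A'idx: "A' $$ (i,j') = (if j' = 0 then A $$ (i,j) else A $$ (i,j'))" if "i < n" "j' < n" for i j'
          unfolding A'_def using that by simp
        have "col A' 0 = col A' j"
          by (rule eq_vecI) (use A'c j n in \<open>auto simp: A'idx False\<close>)
        then have "det A' = 0" using det_identical_columns[OF A'c, of 0 j] False j n by auto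
        moreover have "keym n A' = keym n A" unfolding keym_def by (rule eq_matI) (auto simp: A'idx)
        ultimately have "A' \<in> F" using Fprop[OF A] j by (intro Fintro[OF A'c]) (auto simp: A'idx)
        then have "lin_L p n a A' = 0" by (rule z)
        moreover have "ellc n a A' 0 = ellc n a A j" unfolding ellc_def using n by (intro sum.cong) (auto simp: A'idx)
        ultimately show ?thesis by (simp add: linL)
      qed
      then show ?thesis using A unfolding F_def Gset_def by auto
    qed
    have "cmod (\<Sum>A\<in>F. ee p (lin_L p n a A)) \<le> (\<Sum>A\<in>F. cmod (ee p (lin_L p n a A)))" by (rule norm_sum)
    also have "\<dots> = (\<Sum>A\<in>F. (if A \<in> Gset p n a then 1 else 0::real))"
      using FG by (intro sum.cong) (auto simp: ee_norm)
    finally show ?thesis .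
  qed
qed


lemma main_bound:
  assumes p: "prime p" and n: "n > 0"
  shows "cmod (S_p p n a) \<le> real (card (Gset p n a))"
proof -
  define M where "M = {A \<in> Fp_mats p n. singular_mod p A}"
  define g where "g = (\<lambda>A. ee p (lin_L p n a A))"
  define h where "h = (\<lambda>A. if A \<in> Gset p n a then 1 else (0::real))"
  have finM: "finite M" unfolding M_def using fin_Fp[of p n] by auto
  have S: "S_p p n a = sum g M" unfolding S_p_def M_def g_def ee_def by simp
  have "sum g M = (\<Sum>K\<in>keym n ` M. \<Sum>A\<in>{A \<in> M. keym n A = K}. g A)"
    by (rule sum.group[symmetric]) (use finM in auto)
  then have "cmod (sum g M) \<le> (\<Sum>K\<in>keym n ` M. cmod (\<Sum>A\<in>{A \<in> M. keym n A = K}. g A))"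
    by (simp add: norm_sum)
  also have "\<dots> \<le> (\<Sum>K\<in>keym n ` M. \<Sum>A\<in>{A \<in> M. keym n A = K}. h A)"
    by (intro sum_mono) (use fiber_bound[OF p n] in \<open>simp add: M_def g_def h_def\<close>)
  also have "\<dots> = sum h M"
    by (rule sum.group) (use finM in auto)
  also have "\<dots> = real (card (M \<inter> Gset p n a))" unfolding h_def using finM by (rule sum_ind)
  also have "\<dots> \<le> real (card (Gset p n a))"
  proof -
    have "finite (Gset p n a)" unfolding Gset_def using fin_Fp[of p n] by auto
    then show ?thesis by (simp add: card_mono)
  qed
  finally show ?thesis using S by simp
qed

theorem lemma3p4:
  fixes n :: nat
  assumes "n \<ge> 1"
  shows "\<exists>C::real. \<forall>(p::nat) (a::nat \<Rightarrow> int).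
           prime p \<longrightarrow> (\<forall>i<n. a i \<in> {0..<int p}) \<longrightarrow> (\<exists>i<n. a i \<noteq> 0) \<longrightarrow>
           cmod (S_p p n a) \<le> C * real p ^ (n^2 - n)"
proof (intro exI[of _ 1] allI impI)
  fix p :: nat and a :: "nat \<Rightarrow> int"
  assume p: "prime p" and ar: "\<forall>i<n. a i \<in> {0..<int p}" and nz: "\<exists>i<n. a i \<noteq> 0"
  obtain k where k: "k < n" "a k \<noteq> 0" using nz by blast
  have ak: "a k \<in> {1..<int p}" using ar k by auto
  have n: "n > 0" using assms by simp
  have "cmod (S_p p n a) \<le> real (card (Gset p n a))" by (rule main_bound[OF p n])
  also have "\<dots> \<le> real (p ^ (n * (n - 1)))" using card_G[of p k n a] p k(1) ak by (simp only: of_nat_le_iff)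
  also have "n * (n - 1) = n^2 - n" by (simp add: power2_eq_square diff_mult_distrib2)
  finally show "cmod (S_p p n a) \<le> 1 * real p ^ (n^2 - n)" by simp
qed

end
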